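(* Let $E: y^2=x^3+Ax+B$ ($A,B\in\mathbb{Z}$) be an elliptic curve over $\mathbb{Q}$. There exist constants $c_1,c_2$ depending only on $E$ such that for every squarefree positive integer $D$ and every point $P\ne O$ of $E_D(\mathbb{Q})$, where $E_D: y^2=x^3+D^2Ax+D^3B$, \[c_1-\log D\le \hat h(P)-h(P)\le c_2+\log D,\] and if in addition $x(P)>D$, then \[c_1-\log D\le \hat h(P)-h(P)\le c_2.\]
   Context: $h$ is the absolute logarithmic Weil height on $\overline{\mathbb{Q}}$; for a point $P$ on an elliptic curve in Weierstrass form, $h(P)=h(x(P))$ and $\hat h(P)=\lim_{n\to\infty} h(2^nP)/4^n$ (the canonical height, not normalized by the factor $1/2$). *)

theory Defs
  imports Complex_Main "HOL-Computational_Algebra.Squarefree"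
begin

text \<open>Points of a Weierstrass curve y^2 = x^3 + a x + b over Q:
  None is the point at infinity O, Some (x,y) an affine point.\<close>

definition on_curve :: "rat \<Rightarrow> rat \<Rightarrow> rat \<times> rat \<Rightarrow> bool" where
  "on_curve a b p \<longleftrightarrow> (snd p)^2 = (fst p)^3 + a * fst p + b"

definition weil_height :: "rat \<Rightarrow> real" where
  "weil_height r = (case quotient_of r of (p, q) \<Rightarrow> ln (real_of_int (max \<bar>p\<bar> \<bar>q\<bar>)))"

definition pt_height :: "(rat \<times> rat) option \<Rightarrow> real" where
  "pt_height P = (case P of None \<Rightarrow> 0 | Some p \<Rightarrow> weil_height (fst p))"

definition ec_double :: "rat \<Rightarrow> rat \<Rightarrow> (rat \<times> rat) option \<Rightarrow> (rat \<times> rat) option" where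
  "ec_double a b P = (case P of None \<Rightarrow> None
     | Some (x, y) \<Rightarrow> if y = 0 then None else
         (let l = (3 * x^2 + a) / (2 * y); x' = l^2 - 2 * x; y' = l * (x - x') - y
          in Some (x', y')))"

text \<open>Canonical height (not normalised by 1/2): lim h(2^n P) / 4^n.\<close>
definition canonical_height :: "rat \<Rightarrow> rat \<Rightarrow> (rat \<times> rat) option \<Rightarrow> real" where
  "canonical_height a b P = lim (\<lambda>n. pt_height ((ec_double a b ^^ n) P) / 4 ^ n)"

end

theory Submission
  imports Defs
begin


lemma abs_div_gcd: fixes a b :: int
  shows "real_of_int \<bar>a div gcd a b\<bar> = real_of_int \<bar>a\<bar> / real_of_int (gcd a b)"
proof (cases "gcd a b = 0")
  case True then show ?thesis by simp
next
  case False
  have "gcd a b dvd a" by simp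
  then obtain k where k: "a = gcd a b * k" by blast
  have "a div gcd a b = k" using False by (subst k) simp
  then show ?thesis using False by (subst (2) k) (simp add: abs_mult)
qed

lemma max_div_pos: "(c::real) > 0 \<Longrightarrow> max (x/c) (y/c) = max x y / c"
  by (simp add: max_def divide_right_mono divide_le_cancel)

lemma wh_frac:
  fixes a b :: int assumes "b \<noteq> 0"
  shows "weil_height (of_int a / of_int b) = ln (real_of_int (max \<bar>a\<bar> \<bar>b\<bar>) / real_of_int (gcd a b))"
proof -
  have q: "quotient_of (of_int a / of_int b) = Rat.normalize (a, b)"
    by (metis Fract_of_int_quotient quotient_of_Fract)
  have g: "gcd a b > 0" using assms by simp
  have e1: "a div - gcd a b = - (a div gcd a b)" by (simp add: dvd_div_neg)
  have e2: "b div - gcd a b = - (b div gcd a b)" by (simp add: dvd_div_neg)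
  have m: "real_of_int (max \<bar>a div gcd a b\<bar> \<bar>b div gcd a b\<bar>) = real_of_int (max \<bar>a\<bar> \<bar>b\<bar>) / real_of_int (gcd a b)"
    using abs_div_gcd[of a b] abs_div_gcd[of b a] g
    by (simp only: of_int_max gcd.commute max_divide_distrib_right[symmetric]) (use g in \<open>simp add: max_div_pos\<close>)
  show ?thesis
    using assms m
    by (simp add: weil_height_def q Rat.normalize_def Let_def e1 e2)
qed


definition FF :: "int \<Rightarrow> int \<Rightarrow> int \<Rightarrow> int \<Rightarrow> int" where
  "FF A B u v = u^4 - 2*A*u^2*v^2 - 8*B*u*v^3 + A^2*v^4"
definition GG :: "int \<Rightarrow> int \<Rightarrow> int \<Rightarrow> int \<Rightarrow> int" where
  "GG A B u v = 4*u^3*v + 4*A*u*v^3 + 4*B*v^4"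

lemma id1: fixes A B u v :: int
  shows "(12*u^2*v + 16*A*v^3) * FF A B u v - (3*u^3 - 5*A*u*v^2 - 27*B*v^3) * GG A B u v
     = 4*(4*A^3+27*B^2)*v^7"
  unfolding FF_def GG_def by algebra

lemma id2: fixes A B u v :: int
  shows "(4*(4*A^3+27*B^2)*u^3 - 4*A^2*B*u^2*v + 4*A*(3*A^3+22*B^2)*u*v^2 + 12*B*(A^3+8*B^2)*v^3) * FF A B u v
     + (A^2*B*u^3 + A*(5*A^3+32*B^2)*u^2*v + 2*B*(13*A^3+96*B^2)*u*v^2 - 3*A^2*(A^3+8*B^2)*v^3) * GG A B u v
     = 4*(4*A^3+27*B^2)*u^7"
  unfolding FF_def GG_def by algebra

lemma curve_double: fixes x y a b l :: rat
  assumes "y^2 = x^3 + a*x + b" "2*y*l = 3*x^2 + a"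
  shows "(l*(x - (l^2-2*x)) - y)^2 = (l^2-2*x)^3 + a*(l^2-2*x) + b"
  using assms by algebra


lemma mono_bd: fixes u v M c :: int
  assumes "\<bar>u\<bar> \<le> M" "\<bar>v\<bar> \<le> M"
  shows "\<bar>c * u^i * v^j\<bar> \<le> \<bar>c\<bar> * M^(i+j)"
proof -
  have "\<bar>u\<bar>^i \<le> M^i" by (rule power_mono[OF assms(1)]) simp
  moreover have "\<bar>v\<bar>^j \<le> M^j" by (rule power_mono[OF assms(2)]) simp
  ultimately have "\<bar>u\<bar>^i * \<bar>v\<bar>^j \<le> M^i * M^j"
    using assms by (intro mult_mono) auto
  then have "\<bar>c\<bar> * (\<bar>u\<bar>^i * \<bar>v\<bar>^j) \<le> \<bar>c\<bar> * (M^i * M^j)"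
    by (intro mult_left_mono) auto
  then show ?thesis by (simp add: abs_mult power_abs power_add mult.assoc)
qed

lemma FF_bd: fixes u v M :: int
  assumes "\<bar>u\<bar> \<le> M" "\<bar>v\<bar> \<le> M"
  shows "\<bar>FF A B u v\<bar> \<le> (1 + 2*\<bar>A\<bar> + 8*\<bar>B\<bar> + A^2) * M^4"
proof -
  have h1: "\<bar>1 * u^4 * v^0\<bar> \<le> \<bar>1\<bar> * M^(4+0)" by (rule mono_bd[OF assms])
  have h2: "\<bar>(2*A) * u^2 * v^2\<bar> \<le> \<bar>2*A\<bar> * M^(2+2)" by (rule mono_bd[OF assms])
  have h3: "\<bar>(8*B) * u^1 * v^3\<bar> \<le> \<bar>8*B\<bar> * M^(1+3)" by (rule mono_bd[OF assms])
  have h4: "\<bar>(A^2) * u^0 * v^4\<bar> \<le> \<bar>A^2\<bar> * M^(0+4)" by (rule mono_bd[OF assms])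
  have e: "FF A B u v = 1 * u^4 * v^0 - (2*A) * u^2 * v^2 - (8*B) * u^1 * v^3 + (A^2) * u^0 * v^4"
    unfolding FF_def by simp
  have "\<bar>FF A B u v\<bar> \<le> \<bar>1 * u^4 * v^0\<bar> + \<bar>(2*A) * u^2 * v^2\<bar> + \<bar>(8*B) * u^1 * v^3\<bar> + \<bar>(A^2) * u^0 * v^4\<bar>"
    unfolding e by linarith
  also have "\<dots> \<le> \<bar>1\<bar> * M^(4+0) + \<bar>2*A\<bar> * M^(2+2) + \<bar>8*B\<bar> * M^(1+3) + \<bar>A^2\<bar> * M^(0+4)"
    using h1 h2 h3 h4 by linarith
  also have "\<dots> = (1 + 2*\<bar>A\<bar> + 8*\<bar>B\<bar> + A^2) * M^4" by (simp add: abs_mult algebra_simps)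
  finally show ?thesis .
qed

lemma GG_bd: fixes u v M :: int
  assumes "\<bar>u\<bar> \<le> M" "\<bar>v\<bar> \<le> M"
  shows "\<bar>GG A B u v\<bar> \<le> (4 + 4*\<bar>A\<bar> + 4*\<bar>B\<bar>) * M^4"
proof -
  have h1: "\<bar>4 * u^3 * v^1\<bar> \<le> \<bar>4\<bar> * M^(3+1)" by (rule mono_bd[OF assms])
  have h2: "\<bar>(4*A) * u^1 * v^3\<bar> \<le> \<bar>4*A\<bar> * M^(1+3)" by (rule mono_bd[OF assms])
  have h3: "\<bar>(4*B) * u^0 * v^4\<bar> \<le> \<bar>4*B\<bar> * M^(0+4)" by (rule mono_bd[OF assms])
  have e: "GG A B u v = 4 * u^3 * v^1 + (4*A) * u^1 * v^3 + (4*B) * u^0 * v^4"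
    unfolding GG_def by simp
  have "\<bar>GG A B u v\<bar> \<le> \<bar>4 * u^3 * v^1\<bar> + \<bar>(4*A) * u^1 * v^3\<bar> + \<bar>(4*B) * u^0 * v^4\<bar>"
    unfolding e by linarith
  also have "\<dots> \<le> \<bar>4\<bar> * M^(3+1) + \<bar>4*A\<bar> * M^(1+3) + \<bar>4*B\<bar> * M^(0+4)"
    using h1 h2 h3 by linarith
  also have "\<dots> = (4 + 4*\<bar>A\<bar> + 4*\<bar>B\<bar>) * M^4" by (simp add: abs_mult algebra_simps)
  finally show ?thesis .
qed


definition cub :: "int \<Rightarrow> int \<Rightarrow> int \<Rightarrow> int \<Rightarrow> int \<Rightarrow> int \<Rightarrow> int" where
  "cub c0 c1 c2 c3 u v = c0*u^3 + c1*u^2*v + c2*u*v^2 + c3*v^3"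

lemma cub_bd: fixes u v M :: int
  assumes "\<bar>u\<bar> \<le> M" "\<bar>v\<bar> \<le> M"
  shows "\<bar>cub c0 c1 c2 c3 u v\<bar> \<le> (\<bar>c0\<bar>+\<bar>c1\<bar>+\<bar>c2\<bar>+\<bar>c3\<bar>) * M^3"
proof -
  have h1: "\<bar>c0 * u^3 * v^0\<bar> \<le> \<bar>c0\<bar> * M^(3+0)" by (rule mono_bd[OF assms])
  have h2: "\<bar>c1 * u^2 * v^1\<bar> \<le> \<bar>c1\<bar> * M^(2+1)" by (rule mono_bd[OF assms])
  have h3: "\<bar>c2 * u^1 * v^2\<bar> \<le> \<bar>c2\<bar> * M^(1+2)" by (rule mono_bd[OF assms])
  have h4: "\<bar>c3 * u^0 * v^3\<bar> \<le> \<bar>c3\<bar> * M^(0+3)" by (rule mono_bd[OF assms])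
  have e: "cub c0 c1 c2 c3 u v = c0 * u^3 * v^0 + c1 * u^2 * v^1 + c2 * u^1 * v^2 + c3 * u^0 * v^3"
    unfolding cub_def by simp
  have "\<bar>cub c0 c1 c2 c3 u v\<bar> \<le> \<bar>c0 * u^3 * v^0\<bar> + \<bar>c1 * u^2 * v^1\<bar> + \<bar>c2 * u^1 * v^2\<bar> + \<bar>c3 * u^0 * v^3\<bar>"
    unfolding e by linarith
  also have "\<dots> \<le> \<bar>c0\<bar> * M^(3+0) + \<bar>c1\<bar> * M^(2+1) + \<bar>c2\<bar> * M^(1+2) + \<bar>c3\<bar> * M^(0+3)"
    using h1 h2 h3 h4 by linarith
  also have "\<dots> = (\<bar>c0\<bar>+\<bar>c1\<bar>+\<bar>c2\<bar>+\<bar>c3\<bar>) * M^3" by (simp add: distrib_right power3_eq_cube)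
  finally show ?thesis .
qed

definition "K1 A B = (1 + 2*\<bar>A\<bar> + 8*\<bar>B\<bar> + A^2) + (4 + 4*\<bar>A\<bar> + 4*\<bar>B\<bar>)"
definition "K2 (A::int) B = (\<bar>12\<bar> + \<bar>16*A\<bar>) + (\<bar>3\<bar> + \<bar>-5*A\<bar> + \<bar>-27*B\<bar>)
  + (\<bar>4*(4*A^3+27*B^2)\<bar> + \<bar>- 4*A^2*B\<bar> + \<bar>4*A*(3*A^3+22*B^2)\<bar> + \<bar>12*B*(A^3+8*B^2)\<bar>)
  + (\<bar>A^2*B\<bar> + \<bar>A*(5*A^3+32*B^2)\<bar> + \<bar>2*B*(13*A^3+96*B^2)\<bar> + \<bar>- 3*A^2*(A^3+8*B^2)\<bar>)"

lemma id1': "cub 0 12 0 (16*A) u v * FF A B u v - cub 3 0 (-5*A) (-27*B) u v * GG A B u v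
     = 4*(4*A^3+27*B^2)*v^7"
  using id1[of u v A B] unfolding cub_def by (simp add: algebra_simps)

lemma id2': "cub (4*(4*A^3+27*B^2)) (- 4*A^2*B) (4*A*(3*A^3+22*B^2)) (12*B*(A^3+8*B^2)) u v * FF A B u v
   + cub (A^2*B) (A*(5*A^3+32*B^2)) (2*B*(13*A^3+96*B^2)) (- 3*A^2*(A^3+8*B^2)) u v * GG A B u v
     = 4*(4*A^3+27*B^2)*u^7"
  using id2[of A B u v] unfolding cub_def by (simp add: algebra_simps)

lemma up_bd: fixes u v :: int
  shows "max \<bar>FF A B u v\<bar> \<bar>GG A B u v\<bar> \<le> K1 A B * (max \<bar>u\<bar> \<bar>v\<bar>)^4"
proof -
  let ?M = "max \<bar>u\<bar> \<bar>v\<bar>"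
  have "\<bar>FF A B u v\<bar> \<le> (1 + 2*\<bar>A\<bar> + 8*\<bar>B\<bar> + A^2) * ?M^4" by (rule FF_bd) auto
  moreover have "\<bar>GG A B u v\<bar> \<le> (4 + 4*\<bar>A\<bar> + 4*\<bar>B\<bar>) * ?M^4" by (rule GG_bd) auto
  moreover have "0 \<le> (4 + 4*\<bar>A\<bar> + 4*\<bar>B\<bar>) * ?M^4" by simp
  moreover have "0 \<le> (1 + 2*\<bar>A\<bar> + 8*\<bar>B\<bar> + A^2) * ?M^4" by simp
  ultimately have "max \<bar>FF A B u v\<bar> \<bar>GG A B u v\<bar> \<le> (1 + 2*\<bar>A\<bar> + 8*\<bar>B\<bar> + A^2) * ?M^4 + (4 + 4*\<bar>A\<bar> + 4*\<bar>B\<bar>) * ?M^4"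
    by linarith
  then show ?thesis unfolding K1_def by (simp add: distrib_right power3_eq_cube)
qed

lemma two_term: fixes a b F G N P :: int
  assumes "\<bar>a\<bar> \<le> P" "\<bar>b\<bar> \<le> Q" "\<bar>F\<bar> \<le> N" "\<bar>G\<bar> \<le> N"
  shows "\<bar>a * F + b * G\<bar> \<le> (P + Q) * N"
proof -
  have "\<bar>a * F\<bar> \<le> P * N" unfolding abs_mult using assms by (intro mult_mono) auto
  moreover have "\<bar>b * G\<bar> \<le> Q * N" unfolding abs_mult using assms by (intro mult_mono) auto
  ultimately show ?thesis using abs_triangle_ineq[of "a*F" "b*G"] by (simp add: distrib_right power3_eq_cube)
qed



lemma low_bd: fixes u v :: int
  shows "4 * \<bar>4*A^3+27*B^2\<bar> * (max \<bar>u\<bar> \<bar>v\<bar>)^7 \<le> K2 A B * (max \<bar>u\<bar> \<bar>v\<bar>)^3 * max \<bar>FF A B u v\<bar> \<bar>GG A B u v\<bar>"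
proof -
  let ?M = "max \<bar>u\<bar> \<bar>v\<bar>"
  let ?N = "max \<bar>FF A B u v\<bar> \<bar>GG A B u v\<bar>"
  define P1 where "P1 = (\<bar>0\<bar> + \<bar>12\<bar> + \<bar>0\<bar> + \<bar>16*A\<bar>) * ?M^3"
  define Q1 where "Q1 = (\<bar>3\<bar> + \<bar>0\<bar> + \<bar>-5*A\<bar> + \<bar>-27*B\<bar>) * ?M^3"
  define P2 where "P2 = (\<bar>4*(4*A^3+27*B^2)\<bar> + \<bar>- 4*A^2*B\<bar> + \<bar>4*A*(3*A^3+22*B^2)\<bar> + \<bar>12*B*(A^3+8*B^2)\<bar>) * ?M^3"
  define Q2 where "Q2 = (\<bar>A^2*B\<bar> + \<bar>A*(5*A^3+32*B^2)\<bar> + \<bar>2*B*(13*A^3+96*B^2)\<bar> + \<bar>- 3*A^2*(A^3+8*B^2)\<bar>) * ?M^3"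
  have uM: "\<bar>u\<bar> \<le> ?M" "\<bar>v\<bar> \<le> ?M" by auto
  have ha: "\<bar>cub 0 12 0 (16*A) u v\<bar> \<le> P1" unfolding P1_def by (rule cub_bd[OF uM])
  have hb: "\<bar>- cub 3 0 (-5*A) (-27*B) u v\<bar> \<le> Q1"
    unfolding abs_minus_cancel Q1_def by (rule cub_bd[OF uM])
  have hc: "\<bar>cub (4*(4*A^3+27*B^2)) (- 4*A^2*B) (4*A*(3*A^3+22*B^2)) (12*B*(A^3+8*B^2)) u v\<bar> \<le> P2"
    unfolding P2_def by (rule cub_bd[OF uM])
  have hd: "\<bar>cub (A^2*B) (A*(5*A^3+32*B^2)) (2*B*(13*A^3+96*B^2)) (- 3*A^2*(A^3+8*B^2)) u v\<bar> \<le> Q2"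
    unfolding Q2_def by (rule cub_bd[OF uM])
  have fN: "\<bar>FF A B u v\<bar> \<le> ?N" "\<bar>GG A B u v\<bar> \<le> ?N" by auto
  have "\<bar>cub 0 12 0 (16*A) u v * FF A B u v + (- cub 3 0 (-5*A) (-27*B) u v) * GG A B u v\<bar> \<le> (P1 + Q1) * ?N"
    by (rule two_term[OF ha hb fN])
  then have v7: "\<bar>4*(4*A^3+27*B^2)*v^7\<bar> \<le> (P1 + Q1) * ?N" using id1'[of A u v B] by simp
  have "\<bar>cub (4*(4*A^3+27*B^2)) (- 4*A^2*B) (4*A*(3*A^3+22*B^2)) (12*B*(A^3+8*B^2)) u v * FF A B u v
   + cub (A^2*B) (A*(5*A^3+32*B^2)) (2*B*(13*A^3+96*B^2)) (- 3*A^2*(A^3+8*B^2)) u v * GG A B u v\<bar> \<le> (P2 + Q2) * ?N"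
    by (rule two_term[OF hc hd fN])
  then have u7: "\<bar>4*(4*A^3+27*B^2)*u^7\<bar> \<le> (P2 + Q2) * ?N" by (simp only: id2')
  have N0: "0 \<le> ?N" by simp
  have S: "P1 + Q1 \<le> K2 A B * ?M^3" "P2 + Q2 \<le> K2 A B * ?M^3"
    unfolding K2_def P1_def P2_def Q1_def Q2_def by (simp_all add: distrib_right)
  have u7': "4 * \<bar>4*A^3+27*B^2\<bar> * \<bar>u\<bar>^7 \<le> (P2 + Q2) * ?N" using u7 by (simp only: abs_mult power_abs) simp
  have v7': "4 * \<bar>4*A^3+27*B^2\<bar> * \<bar>v\<bar>^7 \<le> (P1 + Q1) * ?N" using v7 by (simp only: abs_mult power_abs) simp
  have "?M^7 = \<bar>u\<bar>^7 \<or> ?M^7 = \<bar>v\<bar>^7" by (simp add: max_def)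
  then have "4 * \<bar>4*A^3+27*B^2\<bar> * ?M^7 \<le> (P1 + Q1) * ?N \<or> 4 * \<bar>4*A^3+27*B^2\<bar> * ?M^7 \<le> (P2 + Q2) * ?N"
    using u7' v7' by auto
  moreover have "(P1 + Q1) * ?N \<le> K2 A B * ?M^3 * ?N" "(P2 + Q2) * ?N \<le> K2 A B * ?M^3 * ?N"
    using S N0 by (simp_all add: mult_right_mono)
  ultimately show ?thesis by linarith
qed

lemma gcd_bd: fixes u v :: int
  assumes "coprime u v"
  shows "gcd (FF A B u v) (GG A B u v) dvd 4*(4*A^3+27*B^2)"
proof -
  let ?g = "gcd (FF A B u v) (GG A B u v)"
  have "?g dvd 4*(4*A^3+27*B^2)*v^7" unfolding id1'[of A u v B, symmetric] by simp
  moreover have "?g dvd 4*(4*A^3+27*B^2)*u^7" unfolding id2'[of A B u v, symmetric] by simp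
  ultimately have "?g dvd gcd (4*(4*A^3+27*B^2)*u^7) (4*(4*A^3+27*B^2)*v^7)" by simp
  also have "gcd (4*(4*A^3+27*B^2)*u^7) (4*(4*A^3+27*B^2)*v^7) = \<bar>4*(4*A^3+27*B^2)\<bar> * gcd (u^7) (v^7)"
    by (simp only: gcd_mult_left) (simp add: abs_mult)
  also have "gcd (u^7) (v^7) = 1" using assms by simp
  finally show ?thesis by simp
qed


lemma K_pos: "K1 A B \<ge> 1" "K2 A B \<ge> 1"
  unfolding K1_def K2_def by auto

lemma ln_ineq: fixes a b c d :: real
  assumes "a * b \<le> c * d" "a > 0" "b > 0" "c > 0"
  shows "ln a + ln b \<le> ln c + ln d"
proof -
  have "d > 0" using assms by (smt (verit) mult_pos_pos mult_le_0_iff)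
  then have "ln (a*b) \<le> ln (c*d)" using assms by (subst ln_le_cancel_iff) auto
  then show ?thesis using assms \<open>d>0\<close> by (simp add: ln_mult)
qed

lemma height_dup_bound:
  fixes A B :: int assumes "4*A^3+27*B^2 \<noteq> 0"
  shows "\<exists>C. \<forall>u v. coprime u v \<and> v > 0 \<longrightarrow>
     (GG A B u v \<noteq> 0 \<longrightarrow> \<bar>weil_height (of_int (FF A B u v) / of_int (GG A B u v)) - 4 * ln (real_of_int (max \<bar>u\<bar> \<bar>v\<bar>))\<bar> \<le> C)
   \<and> (GG A B u v = 0 \<longrightarrow> 4 * ln (real_of_int (max \<bar>u\<bar> \<bar>v\<bar>)) \<le> C)"
proof -
  define E where "E = 4 * \<bar>4*A^3+27*B^2\<bar>"
  have E0: "E > 0" using assms unfolding E_def by auto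
  define C where "C = ln (real_of_int (K1 A B)) + ln (real_of_int (K2 A B))"
  have lK: "ln (real_of_int (K1 A B)) \<ge> 0" "ln (real_of_int (K2 A B)) \<ge> 0" using K_pos[of A B] by auto
  show ?thesis
  proof (intro exI[of _ C] allI impI conjI)
    fix u v :: int assume uv: "coprime u v \<and> v > 0"
    define M where "M = max \<bar>u\<bar> \<bar>v\<bar>"
    define N where "N = max \<bar>FF A B u v\<bar> \<bar>GG A B u v\<bar>"
    define g where "g = gcd (FF A B u v) (GG A B u v)"
    have M1: "M \<ge> 1" using uv unfolding M_def by auto
    have up: "N \<le> K1 A B * M^4" unfolding N_def M_def by (rule up_bd)
    have lo7: "E * M^7 \<le> K2 A B * M^3 * N" unfolding E_def N_def M_def using low_bd[of A B u v] by simp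
    have lo: "E * M^4 \<le> K2 A B * N"
    proof -
      have "M^3 * (E * M^4) \<le> M^3 * (K2 A B * N)" using lo7
        by (simp add: algebra_simps power_add[symmetric])
      then show ?thesis using M1 by (simp add: mult_le_cancel_left)
    qed
    have N1: "N \<ge> 1"
    proof (rule ccontr)
      assume "\<not> N \<ge> 1"
      then have "N \<le> 0" by simp
      moreover have "E * M^4 > 0" using E0 M1 by simp
      ultimately show False using lo K_pos[of A B] by (smt (verit) mult_nonneg_nonpos)
    qed
    have gd: "g dvd 4*(4*A^3+27*B^2)" unfolding g_def using uv by (intro gcd_bd) auto
    have gE: "g \<le> E" if "g > 0"
    proof -
      have "E = \<bar>4*(4*A^3+27*B^2)\<bar>" unfolding E_def by (simp only: abs_mult)
      then have "g dvd E" using gd by (simp only: dvd_abs_iff)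
      then show ?thesis using E0 by (simp add: zdvd_imp_le)
    qed
    have rup: "ln (real_of_int N) \<le> ln (real_of_int (K1 A B)) + 4 * ln (real_of_int M)"
    proof -
      have "real_of_int N \<le> real_of_int (K1 A B) * real_of_int M ^ 4" using up
        by (metis of_int_le_iff of_int_mult of_int_power)
      then have "ln (real_of_int N) \<le> ln (real_of_int (K1 A B) * real_of_int M ^ 4)"
        using N1 by (subst ln_le_cancel_iff) auto
      then show ?thesis using M1 K_pos[of A B] by (simp add: ln_mult ln_realpow)
    qed
    have rlo: "ln (real_of_int E) + 4 * ln (real_of_int M) \<le> ln (real_of_int (K2 A B)) + ln (real_of_int N)"
    proof -
      have "real_of_int E * real_of_int M ^ 4 \<le> real_of_int (K2 A B) * real_of_int N" using lo
        by (metis of_int_le_iff of_int_mult of_int_power)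
      from ln_ineq[OF this] have "ln (real_of_int E) + ln (real_of_int M ^ 4) \<le> ln (real_of_int (K2 A B)) + ln (real_of_int N)"
        using E0 M1 K_pos[of A B] by simp
      then show ?thesis using M1 by (simp add: ln_realpow)
    qed
    show "\<bar>weil_height (of_int (FF A B u v) / of_int (GG A B u v)) - 4 * ln (real_of_int (max \<bar>u\<bar> \<bar>v\<bar>))\<bar> \<le> C"
      if G0: "GG A B u v \<noteq> 0"
    proof -
      have g0: "g > 0" unfolding g_def using G0 by simp
      have wh: "weil_height (of_int (FF A B u v) / of_int (GG A B u v)) = ln (real_of_int N) - ln (real_of_int g)"
        using wh_frac[OF G0] g0 N1 unfolding N_def g_def by (simp add: ln_div)
      have "ln (real_of_int g) \<ge> 0" using g0 by simp
      moreover have "ln (real_of_int g) \<le> ln (real_of_int E)" using gE[OF g0] g0 by simp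
      ultimately show "\<bar>weil_height (of_int (FF A B u v) / of_int (GG A B u v)) - 4 * ln (real_of_int (max \<bar>u\<bar> \<bar>v\<bar>))\<bar> \<le> C"
        unfolding wh C_def M_def[symmetric] using rup rlo lK by linarith
    qed
    show "4 * ln (real_of_int (max \<bar>u\<bar> \<bar>v\<bar>)) \<le> C" if G0: "GG A B u v = 0"
    proof -
      have gN: "g = N" unfolding g_def N_def using G0 by simp
      have "ln (real_of_int N) \<le> ln (real_of_int E)" using gE N1 gN by simp
      then show "4 * ln (real_of_int (max \<bar>u\<bar> \<bar>v\<bar>)) \<le> C"
        unfolding C_def M_def[symmetric] using rlo lK gN by linarith
    qed
  qed
qed


lemma dbl_formula: fixes x y a b :: rat
  assumes c: "y^2 = x^3+a*x+b" and y: "y \<noteq> 0"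
  shows "((3*x^2+a)/(2*y))^2 - 2*x = (x^4 - 2*a*x^2 - 8*b*x + a^2)/(4*(x^3+a*x+b))"
proof -
  have P: "x^3+a*x+b \<noteq> 0" unfolding c[symmetric] using y by simp
  have "((3*x^2+a)/(2*y))^2 = (3*x^2+a)^2/(2*y)^2" by (rule power_divide)
  also have "(2*y)^2 = 4*(x^3+a*x+b)" using c by (simp add: power_mult_distrib)
  finally have e: "((3*x^2+a)/(2*y))^2 = (3*x^2+a)^2/(4*(x^3+a*x+b))" .
  have id: "(3*x^2+a)^2 - 2*x*(4*(x^3+a*x+b)) = x^4 - 2*a*x^2 - 8*b*x + a^2" by algebra
  have "(3*x^2+a)^2/(4*(x^3+a*x+b)) - 2*x = ((3*x^2+a)^2 - 2*x*(4*(x^3+a*x+b)))/(4*(x^3+a*x+b))"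
    using P by (simp add: diff_divide_distrib)
  then show ?thesis unfolding e id .
qed

lemma dbl_step:
  fixes A B D :: int and x y :: rat
  assumes D: "D > 0" and oc: "on_curve (of_int (D^2*A)) (of_int (D^3*B)) (x,y)"
    and q: "quotient_of (x / of_int D) = (u,v)"
  shows "(y = 0 \<longrightarrow> ec_double (of_int (D^2*A)) (of_int (D^3*B)) (Some (x,y)) = None \<and> GG A B u v = 0)
       \<and> (y \<noteq> 0 \<longrightarrow> (\<exists>x' y'. ec_double (of_int (D^2*A)) (of_int (D^3*B)) (Some (x,y)) = Some (x',y')
             \<and> on_curve (of_int (D^2*A)) (of_int (D^3*B)) (x',y')
             \<and> x' / of_int D = of_int (FF A B u v) / of_int (GG A B u v) \<and> GG A B u v \<noteq> 0))"
proof -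
  define a :: rat where "a = of_int (D^2*A)"
  define b :: rat where "b = of_int (D^3*B)"
  have c: "y^2 = x^3 + a*x + b" using oc unfolding on_curve_def a_def b_def by simp
  have v0: "v > 0" using quotient_of_denom_pos[OF q] .
  have xd: "x / of_int D = of_int u / of_int v" using quotient_of_div[OF q] .
  have xv: "x * of_int v = of_int D * of_int u" using xd D v0 by (simp add: field_simps)
  have hN: "(x^4 - 2*a*x^2 - 8*b*x + a^2) * of_int v^4 = of_int D^4 * of_int (FF A B u v)"
    unfolding a_def b_def FF_def using xv by simp algebra
  have hP: "4*(x^3+a*x+b) * of_int v^4 = of_int D^3 * of_int (GG A B u v)"
    unfolding a_def b_def GG_def using xv by simp algebra
  have Dq: "(of_int D :: rat) \<noteq> 0" "(of_int v :: rat) \<noteq> 0" using D v0 by auto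
  show ?thesis
  proof (intro conjI impI)
    assume y0: "y = 0"
    then have "x^3+a*x+b = 0" using c by simp
    then have "of_int D^3 * of_int (GG A B u v) = (0::rat)" using hP by simp
    then show "GG A B u v = 0" using Dq by simp
    show "ec_double (of_int (D^2*A)) (of_int (D^3*B)) (Some (x,y)) = None"
      using y0 unfolding ec_double_def by simp
  next
    assume y0: "y \<noteq> 0"
    define l where "l = (3 * x^2 + a) / (2 * y)"
    define x' where "x' = l^2 - 2*x"
    define y' where "y' = l * (x - x') - y"
    have ed: "ec_double a b (Some (x,y)) = Some (x',y')"
      unfolding ec_double_def l_def x'_def y'_def using y0 by (simp add: Let_def)
    have ll: "2*y*l = 3*x^2 + a" unfolding l_def using y0 by simp
    have oc': "on_curve a b (x',y')"
      unfolding on_curve_def x'_def y'_def using curve_double[OF c ll] by simp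
    have P: "x^3+a*x+b \<noteq> 0" unfolding c[symmetric] using y0 by simp
    have G: "GG A B u v \<noteq> 0" using hP P Dq by auto
    have "x' = (x^4 - 2*a*x^2 - 8*b*x + a^2)/(4*(x^3+a*x+b))"
      unfolding x'_def l_def by (rule dbl_formula[OF c y0])
    also have "\<dots> = ((x^4 - 2*a*x^2 - 8*b*x + a^2) * of_int v^4)/((4*(x^3+a*x+b)) * of_int v^4)"
      using Dq by simp
    also have "\<dots> = (of_int D^4 * of_int (FF A B u v)) / (of_int D^3 * of_int (GG A B u v))"
      unfolding hN hP ..
    finally have "x' / of_int D = (of_int D^4 * of_int (FF A B u v)) / (of_int D^3 * of_int (GG A B u v)) / of_int D"
      by simp
    also have "\<dots> = of_int (FF A B u v) / of_int (GG A B u v)"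
      using Dq G by (simp add: field_simps power_eq_if)
    finally have "x' / of_int D = of_int (FF A B u v) / of_int (GG A B u v)" .
    then show "\<exists>x' y'. ec_double (of_int (D^2*A)) (of_int (D^3*B)) (Some (x,y)) = Some (x',y')
             \<and> on_curve (of_int (D^2*A)) (of_int (D^3*B)) (x',y')
             \<and> x' / of_int D = of_int (FF A B u v) / of_int (GG A B u v) \<and> GG A B u v \<noteq> 0"
      using ed oc' G unfolding a_def b_def by blast
  qed
qed


lemma tele:
  fixes s :: "nat \<Rightarrow> real"
  assumes h: "\<And>n. \<bar>s (Suc n) - 4 * s n\<bar> \<le> C"
  shows "\<exists>L. (\<lambda>n. s n / 4^n) \<longlonglongrightarrow> L \<and> \<bar>L - s 0\<bar> \<le> C/3"
proof -
  define w where "w n = s n / 4^n" for n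
  define d where "d n = w (Suc n) - w n" for n
  define g where "g n = (C/4) * (1/4)^n" for n :: nat
  have dg: "\<bar>d n\<bar> \<le> g n" for n
  proof -
    have "d n = (s (Suc n) - 4 * s n) / 4^(Suc n)" unfolding d_def w_def by (simp add: field_simps)
    then have "\<bar>d n\<bar> = \<bar>s (Suc n) - 4 * s n\<bar> / 4^(Suc n)" by simp
    also have "\<dots> \<le> C / 4^(Suc n)" using h[of n] by (intro divide_right_mono) auto
    also have "\<dots> = g n" unfolding g_def by (simp add: power_one_over field_simps)
    finally show ?thesis .
  qed
  have gs: "g sums (C/4 * (1 / (1 - 1/4)))" unfolding g_def
    by (intro sums_mult geometric_sums) simp
  then have gsum: "summable g" "suminf g = C/3" by (auto simp: sums_iff)
  have ds: "summable d" using dg gsum(1) by (intro summable_comparison_test[of d g]) auto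
  have dg1: "d n \<le> g n" "- g n \<le> d n" for n using dg[of n] by auto
  have ng: "summable (\<lambda>n. - g n)" using gsum(1) by (rule summable_minus)
  have "suminf d \<le> suminf g" using dg1 ds gsum(1) by (intro suminf_le) auto
  moreover have "suminf (\<lambda>n. - g n) \<le> suminf d" using dg1 ds ng by (intro suminf_le) auto
  moreover have "suminf (\<lambda>n. - g n) = - suminf g" using gsum(1) by (rule suminf_minus)
  ultimately have bd: "\<bar>suminf d\<bar> \<le> C/3" using gsum(2) by linarith
  have tel: "w n = w 0 + (\<Sum>i<n. d i)" for n
    unfolding d_def by (simp add: sum_lessThan_telescope)
  have "(\<lambda>n. w 0 + (\<Sum>i<n. d i)) \<longlonglongrightarrow> w 0 + suminf d"
    by (intro tendsto_add tendsto_const summable_LIMSEQ ds)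
  then have "w \<longlonglongrightarrow> w 0 + suminf d" unfolding tel[symmetric] by simp
  moreover have "w 0 = s 0" unfolding w_def by simp
  ultimately show ?thesis using bd unfolding w_def by (intro exI[of _ "s 0 + suminf d"]) auto
qed

lemma approx_lim:
  fixes r w :: "nat \<Rightarrow> real"
  assumes "w \<longlonglongrightarrow> L" "\<And>n. \<bar>r n - w n\<bar> \<le> K / 4^n"
  shows "r \<longlonglongrightarrow> L"
proof -
  have z: "(\<lambda>n. K / 4^n) \<longlonglongrightarrow> 0"
    by (intro LIMSEQ_divide_realpow_zero) simp
  have "(\<lambda>n. w n - K / 4^n) \<longlonglongrightarrow> L - 0" by (intro tendsto_diff assms(1) z)
  then have l1: "(\<lambda>n. w n - K / 4^n) \<longlonglongrightarrow> L" by simp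
  have "(\<lambda>n. w n + K / 4^n) \<longlonglongrightarrow> L + 0" by (intro tendsto_add assms(1) z)
  then have l2: "(\<lambda>n. w n + K / 4^n) \<longlonglongrightarrow> L" by simp
  have a1: "w n - K/4^n \<le> r n \<and> r n \<le> w n + K/4^n" for n
    using assms(2)[of n] unfolding abs_le_iff by linarith
  show ?thesis
    by (rule tendsto_sandwich[OF _ _ l1 l2]) (use a1 in \<open>simp_all add: always_eventually\<close>)
qed


lemma wh_quot: "quotient_of r = (p, q) \<Longrightarrow> weil_height r = ln (real_of_int (max \<bar>p\<bar> \<bar>q\<bar>))"
  unfolding weil_height_def by simp

lemma wh_nonneg: "weil_height r \<ge> 0"
proof -
  obtain p q where q: "quotient_of r = (p,q)" by force
  have "q > 0" using quotient_of_denom_pos[OF q] .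
  then show ?thesis unfolding wh_quot[OF q] by simp
qed

lemma wh_scale:
  fixes D :: int and x :: rat assumes D: "D > 0"
  shows "\<bar>weil_height x - weil_height (x / of_int D)\<bar> \<le> ln (real_of_int D)"
    and "x > of_int D \<Longrightarrow> weil_height (x / of_int D) \<le> weil_height x"
proof -
  obtain p q where pq: "quotient_of x = (p,q)" by force
  have q0: "q > 0" using quotient_of_denom_pos[OF pq] .
  have cop: "coprime p q" using quotient_of_coprime[OF pq] .
  have xe: "x = of_int p / of_int q" using quotient_of_div[OF pq] .
  have xd: "x / of_int D = of_int p / of_int (q * D)" using xe by simp
  have qD: "q * D \<noteq> 0" using q0 D by simp
  define g where "g = gcd p (q*D)"
  define m where "m = max \<bar>p\<bar> q"
  define m' where "m' = max \<bar>p\<bar> (q*D)"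
  have h1: "weil_height x = ln (real_of_int m)" unfolding wh_quot[OF pq] m_def using q0 by simp
  have h2: "weil_height (x / of_int D) = ln (real_of_int m' / real_of_int g)"
    unfolding xd wh_frac[OF qD] m'_def g_def using q0 D by (simp add: abs_mult)
  have g0: "g > 0" unfolding g_def using qD by simp
  have "g dvd gcd (p*D) (q*D)" unfolding g_def by simp
  also have "gcd (p*D) (q*D) = D" using cop D by (simp add: gcd_mult_right gcd.commute[of q p])
  finally have gD: "g \<le> D" using D by (simp add: zdvd_imp_le)
  have m1: "m \<ge> 1" unfolding m_def using q0 by simp
  have mm: "m \<le> m'" "m' \<le> D * m" unfolding m_def m'_def using q0 D
    by (auto simp: max_def mult_le_cancel_left1 intro: order_trans[of _ "\<bar>p\<bar>"]) (smt (verit) mult_le_cancel_right1 mult.commute)+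
  have rm: "real_of_int m \<le> real_of_int m'" "real_of_int m' \<le> real_of_int D * real_of_int m" "real_of_int g \<le> real_of_int D"
    using mm gD by (metis of_int_le_iff of_int_mult)+
  have l1: "ln (real_of_int m) \<le> ln (real_of_int m')" using rm m1 by simp
  have l2: "ln (real_of_int m') \<le> ln (real_of_int D) + ln (real_of_int m)"
  proof -
    have "ln (real_of_int m') \<le> ln (real_of_int D * real_of_int m)" using rm m1 mm by simp
    then show ?thesis using m1 D by (simp add: ln_mult)
  qed
  have l3: "0 \<le> ln (real_of_int g)" "ln (real_of_int g) \<le> ln (real_of_int D)" using g0 gD by simp_all
  have h2': "weil_height (x / of_int D) = ln (real_of_int m') - ln (real_of_int g)"
    unfolding h2 using g0 m1 mm by (simp add: ln_div)
  show "\<bar>weil_height x - weil_height (x / of_int D)\<bar> \<le> ln (real_of_int D)"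
    unfolding h1 h2' using l1 l2 l3 by linarith
  assume xD: "x > of_int D"
  have "of_int p > of_int D * (of_int q :: rat)" using xD q0 unfolding xe by (simp add: field_simps)
  then have pD: "p > D * q" by (metis of_int_less_iff of_int_mult)
  then have "m' = m" unfolding m_def m'_def using q0 D
    by (smt (verit) mult.commute mult_le_cancel_right1)
  then show "weil_height (x / of_int D) \<le> weil_height x" unfolding h1 h2' using l3 by simp
qed


theorem lemma3p3:
  fixes A B :: int
  assumes nonsing: "4 * A^3 + 27 * B^2 \<noteq> 0"
  shows "\<exists>c1 c2 :: real. \<forall>(D::int) (x::rat) (y::rat).
     squarefree D \<and> D > 0 \<and>
     on_curve (of_int (D^2 * A)) (of_int (D^3 * B)) (x, y) \<longrightarrow>
       (let d = canonical_height (of_int (D^2 * A)) (of_int (D^3 * B)) (Some (x, y))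
                - pt_height (Some (x, y))
        in c1 - ln (real_of_int D) \<le> d \<and> d \<le> c2 + ln (real_of_int D) \<and>
           (x > of_int D \<longrightarrow> c1 - ln (real_of_int D) \<le> d \<and> d \<le> c2))"
proof -
  obtain C where HC: "\<forall>u v. coprime u v \<and> v > 0 \<longrightarrow>
     (GG A B u v \<noteq> 0 \<longrightarrow> \<bar>weil_height (of_int (FF A B u v) / of_int (GG A B u v)) - 4 * ln (real_of_int (max \<bar>u\<bar> \<bar>v\<bar>))\<bar> \<le> C)
   \<and> (GG A B u v = 0 \<longrightarrow> 4 * ln (real_of_int (max \<bar>u\<bar> \<bar>v\<bar>)) \<le> C)"
    using height_dup_bound[OF nonsing] by blast
  have C0: "C \<ge> 0"
  proof -
    have "coprime (0::int) 1 \<and> (1::int) > 0" by simp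
    note H = HC[rule_format, OF this]
    have m: "max \<bar>0::int\<bar> \<bar>1\<bar> = 1" by simp
    show ?thesis
    proof (cases "GG A B 0 1 = 0")
      case True then show ?thesis using H unfolding m by simp
    next
      case False
      then have "\<bar>weil_height (rat_of_int (FF A B 0 1) / rat_of_int (GG A B 0 1)) - 4 * ln (real_of_int (max \<bar>0::int\<bar> \<bar>1\<bar>))\<bar> \<le> C"
        using H by blast
      then show ?thesis by linarith
    qed
  qed
  show ?thesis
  proof (rule exI[of _ "-C/3"], rule exI[of _ "C/3"], intro allI impI)
    fix D :: int and x y :: rat
    assume asm: "squarefree D \<and> D > 0 \<and> on_curve (of_int (D^2 * A)) (of_int (D^3 * B)) (x, y)"
    then have D: "D > 0" by simp
    define a :: rat where "a = of_int (D^2 * A)"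
    define b :: rat where "b = of_int (D^3 * B)"
    define dbl where "dbl = ec_double a b"
    define hp :: "(rat \<times> rat) option \<Rightarrow> real" where "hp P = (case P of None \<Rightarrow> 0 | Some p \<Rightarrow> weil_height (fst p / of_int D))" for P
    define good where "good P = (P = None \<or> (\<exists>x y. P = Some (x,y) \<and> on_curve a b (x,y)))" for P
    have step: "good (dbl P) \<and> \<bar>hp (dbl P) - 4 * hp P\<bar> \<le> C" if gP: "good P" for P
    proof (cases P)
      case None
      then show ?thesis unfolding dbl_def good_def hp_def ec_double_def using C0 by simp
    next
      case (Some p)
      then obtain x0 y0 where P: "P = Some (x0,y0)" and oc: "on_curve a b (x0,y0)"
        using gP unfolding good_def by auto
      obtain u v where q: "quotient_of (x0 / of_int D) = (u,v)" by force
      have uv: "coprime u v \<and> v > 0" using quotient_of_coprime[OF q] quotient_of_denom_pos[OF q] by simp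
      have hpP: "hp P = ln (real_of_int (max \<bar>u\<bar> \<bar>v\<bar>))" unfolding hp_def P using wh_quot[OF q] by simp
      have ds: "(y0 = 0 \<longrightarrow> ec_double a b (Some (x0,y0)) = None \<and> GG A B u v = 0)
       \<and> (y0 \<noteq> 0 \<longrightarrow> (\<exists>x' y'. ec_double a b (Some (x0,y0)) = Some (x',y')
             \<and> on_curve a b (x',y')
             \<and> x' / of_int D = of_int (FF A B u v) / of_int (GG A B u v) \<and> GG A B u v \<noteq> 0))"
        using dbl_step[OF D oc[unfolded a_def b_def] q] unfolding a_def b_def .
      show ?thesis
      proof (cases "y0 = 0")
        case True
        then have "dbl P = None" "GG A B u v = 0" using ds unfolding dbl_def P by auto
        moreover have "hp P \<ge> 0" unfolding hp_def P by (simp add: wh_nonneg)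
        ultimately show ?thesis using HC uv hpP unfolding good_def hp_def by auto
      next
        case False
        then obtain x' y' where e: "dbl P = Some (x',y')" "on_curve a b (x',y')"
          "x' / of_int D = of_int (FF A B u v) / of_int (GG A B u v)" "GG A B u v \<noteq> 0"
          using ds unfolding dbl_def P by blast
        have "hp (dbl P) = weil_height (of_int (FF A B u v) / of_int (GG A B u v))"
          unfolding hp_def e(1) using e(3) by simp
        then show ?thesis using HC uv hpP e unfolding good_def by auto
      qed
    qed
    define P0 where "P0 = Some (x,y)"
    have g0: "good P0" unfolding P0_def good_def a_def b_def using asm by auto
    have gn: "good ((dbl ^^ n) P0)" for n
      by (induction n) (use g0 step in auto)
    define s where "s n = hp ((dbl ^^ n) P0)" for n
    have sb: "\<bar>s (Suc n) - 4 * s n\<bar> \<le> C" for n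
      unfolding s_def using step[OF gn[of n]] by simp
    obtain L where L: "(\<lambda>n. s n / 4^n) \<longlonglongrightarrow> L" "\<bar>L - s 0\<bar> \<le> C/3"
      using tele[of s C, OF sb] by blast
    define r where "r n = pt_height ((dbl ^^ n) P0) / 4^n" for n
    have rs: "\<bar>r n - s n / 4^n\<bar> \<le> ln (real_of_int D) / 4^n" for n
    proof -
      have "\<bar>pt_height ((dbl ^^ n) P0) - s n\<bar> \<le> ln (real_of_int D)"
        unfolding s_def hp_def pt_height_def using wh_scale(1)[OF D] D
        by (cases "(dbl ^^ n) P0") auto
      then have "\<bar>pt_height ((dbl ^^ n) P0) - s n\<bar> / 4^n \<le> ln (real_of_int D) / 4^n"
        by (intro divide_right_mono) auto
      then show ?thesis unfolding r_def by (simp add: diff_divide_distrib[symmetric])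
    qed
    have "r \<longlonglongrightarrow> L" by (rule approx_lim[OF L(1) rs])
    then have ch: "canonical_height a b P0 = L"
      unfolding canonical_height_def r_def dbl_def by (rule limI)
    have s0: "s 0 = weil_height (x / of_int D)" unfolding s_def hp_def P0_def by simp
    have pt: "pt_height (Some (x,y)) = weil_height x" unfolding pt_height_def by simp
    have w1: "\<bar>weil_height x - weil_height (x / of_int D)\<bar> \<le> ln (real_of_int D)"
      by (rule wh_scale(1)[OF D])
    have w2: "x > of_int D \<Longrightarrow> weil_height (x / of_int D) \<le> weil_height x"
      by (rule wh_scale(2)[OF D])
    show "let d = canonical_height (of_int (D^2 * A)) (of_int (D^3 * B)) (Some (x, y))
                - pt_height (Some (x, y))
        in - C / 3 - ln (real_of_int D) \<le> d \<and> d \<le> C / 3 + ln (real_of_int D) \<and>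
           (x > of_int D \<longrightarrow> - C / 3 - ln (real_of_int D) \<le> d \<and> d \<le> C / 3)"
    proof -
      have i1: "L - weil_height (x / of_int D) \<le> C/3" "weil_height (x / of_int D) - L \<le> C/3"
        using L(2) unfolding s0 abs_le_iff by linarith+
      have i2: "weil_height x - weil_height (x / of_int D) \<le> ln (real_of_int D)"
        "weil_height (x / of_int D) - weil_height x \<le> ln (real_of_int D)"
        using w1 by (simp_all add: abs_le_iff)
      have r1: "- C / 3 - ln (real_of_int D) \<le> L - weil_height x" using i1 i2 by linarith
      have r2: "L - weil_height x \<le> C / 3 + ln (real_of_int D)" using i1 i2 by linarith
      have r3: "L - weil_height x \<le> C / 3" if "x > of_int D"
        using w2[OF that] i1 by linarith
      show ?thesis unfolding Let_def ch[unfolded a_def b_def P0_def] pt using r1 r2 r3 by blast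
    qed
  qed
qed
end
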